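(* Let $A$ be a normed PI-algebra over $F\in\{\mathbb{R},\mathbb{C}\}$. If its completion $C(A)$ is nil, then $A$ is nilpotent.
   Context: All algebras are non-unitary associative over $F$. A normed algebra has a norm with $\|ab\|\le\|a\|\|b\|$; $C(A)$ is its completion as a Banach algebra. $A$ is a PI-algebra if it satisfies a nonzero polynomial identity, i.e. there is a nonzero $f(x_1,\dots,x_m)$ in the free non-unitary associative algebra $F\langle x_1,x_2,\dots\rangle$ with $f(a_1,\dots,a_m)=0$ for all $a_i\in A$. An algebra is nil if every element is nilpotent, and nilpotent if there is $n$ with $a_1a_2\cdots a_n=0$ for all $a_1,\dots,a_n$ in it. *)

theory Defs
  imports "HOL-Analysis.Analysis"
begin

fun mprod :: "(nat \<Rightarrow> 'a::times) \<Rightarrow> nat list \<Rightarrow> 'a" where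
  "mprod a [] = undefined"
| "mprod a [i] = a i"
| "mprod a (i # j # js) = a i * mprod a (j # js)"

text \<open>Elements of the free non-unitary associative algebra F<x1,x2,...>:
  finitely supported coefficient functions on nonempty words (the empty word
  has coefficient 0).\<close>
definition free_poly :: "(nat list \<Rightarrow> 'k::zero) \<Rightarrow> bool" where
  "free_poly f \<longleftrightarrow> finite {w. f w \<noteq> 0} \<and> f [] = 0"

definition poly_eval :: "('k \<Rightarrow> 'a \<Rightarrow> 'a) \<Rightarrow> (nat list \<Rightarrow> 'k::zero) \<Rightarrow> (nat \<Rightarrow> 'a::{times,comm_monoid_add}) \<Rightarrow> 'a" where
  "poly_eval sc f a = (\<Sum>w\<in>{w. f w \<noteq> 0}. sc (f w) (mprod a w))"

definition is_PI :: "('k::zero \<Rightarrow> 'a \<Rightarrow> 'a) \<Rightarrow> 'a::{times,comm_monoid_add} set \<Rightarrow> bool" where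
  "is_PI sc A \<longleftrightarrow> (\<exists>f :: nat list \<Rightarrow> 'k. free_poly f \<and> (\<exists>w. f w \<noteq> 0) \<and>
      (\<forall>a. (\<forall>i. a i \<in> A) \<longrightarrow> poly_eval sc f a = 0))"

definition subalg :: "('k \<Rightarrow> 'a \<Rightarrow> 'a) \<Rightarrow> 'a::{times,comm_monoid_add} set \<Rightarrow> bool" where
  "subalg sc A \<longleftrightarrow> 0 \<in> A \<and> (\<forall>x\<in>A. \<forall>y\<in>A. x + y \<in> A \<and> x * y \<in> A) \<and>
      (\<forall>c. \<forall>x\<in>A. sc c x \<in> A)"

text \<open>A complex structure on a real normed algebra making it a complex normed algebra.\<close>
definition complex_scale :: "(complex \<Rightarrow> 'a::real_normed_algebra \<Rightarrow> 'a) \<Rightarrow> bool" where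
  "complex_scale sc \<longleftrightarrow>
     (\<forall>c x y. sc c (x + y) = sc c x + sc c y) \<and>
     (\<forall>c d x. sc (c + d) x = sc c x + sc d x) \<and>
     (\<forall>c d x. sc (c * d) x = sc c (sc d x)) \<and>
     (\<forall>r x. sc (complex_of_real r) x = scaleR r x) \<and>
     (\<forall>c x. norm (sc c x) = cmod c * norm x) \<and>
     (\<forall>c x y. sc c (x * y) = sc c x * y \<and> sc c (x * y) = x * sc c y)"

definition nil_alg :: "'a::{times,zero} set \<Rightarrow> bool" where
  "nil_alg B \<longleftrightarrow> (\<forall>x\<in>B. \<exists>n\<ge>1. mprod (\<lambda>_. x) (replicate n 0) = 0)"

definition nilpotent_alg :: "'a::{times,zero} set \<Rightarrow> bool" where
  "nilpotent_alg A \<longleftrightarrow> (\<exists>n\<ge>1. \<forall>a. (\<forall>i. a i \<in> A) \<longrightarrow> mprod a [0..<n] = 0)"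

end

theory Submission
  imports Defs
begin

fun lp :: "'a::times list \<Rightarrow> 'a" where
  "lp [] = undefined"
| "lp [a] = a"
| "lp (a # b # l) = a * lp (b # l)"

lemma mprod_lp: "mprod a w = lp (map a w)"
  by (induction a w rule: mprod.induct) auto

lemma lp_Cons: "l \<noteq> [] \<Longrightarrow> lp (a # l) = a * lp l"
  by (cases l) auto

lemma lp_append:
  fixes xs :: "'a::semigroup_mult list"
  shows "xs \<noteq> [] \<Longrightarrow> ys \<noteq> [] \<Longrightarrow> lp (xs @ ys) = lp xs * lp ys"
proof (induction xs)
  case Nil then show ?case by simp
next
  case (Cons a xs)
  show ?case
  proof (cases "xs = []")
    case True then show ?thesis using Cons by (simp add: lp_Cons)
  next
    case False then show ?thesis using Cons by (simp add: lp_Cons mult.assoc)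
  qed
qed

lemma lp_app_l:
  fixes us :: "'a::semigroup_mult list"
  shows "l \<noteq> [] \<Longrightarrow> lp (us @ l) = (if us = [] then lp l else lp us * lp l)"
  using lp_append by auto

lemma lp_app_r:
  fixes vs :: "'a::semigroup_mult list"
  shows "l \<noteq> [] \<Longrightarrow> lp (l @ vs) = (if vs = [] then lp l else lp l * lp vs)"
  using lp_append by auto

lemma lp_flat:
  fixes us :: "'a::semigroup_mult list"
  assumes "ws \<noteq> []"
  shows "lp (us @ ws @ vs) = lp (us @ [lp ws] @ vs)"
proof -
  have a: "lp (us @ ws @ vs) = (if us = [] then lp (ws @ vs) else lp us * lp (ws @ vs))"
    using assms by (intro lp_app_l) auto
  have b: "lp (us @ [lp ws] @ vs) = (if us = [] then lp ([lp ws] @ vs) else lp us * lp ([lp ws] @ vs))"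
    by (intro lp_app_l) auto
  have c: "lp (ws @ vs) = lp ([lp ws] @ vs)"
    using assms by (cases "vs = []") (auto simp: lp_append lp_Cons)
  show ?thesis using a b c by simp
qed

definition cideal :: "'a::real_normed_algebra set \<Rightarrow> bool" where
  "cideal J \<longleftrightarrow> closed J \<and> 0 \<in> J \<and> (\<forall>x\<in>J. \<forall>y\<in>J. x + y \<in> J) \<and> (\<forall>c. \<forall>x\<in>J. c *\<^sub>R x \<in> J)
     \<and> (\<forall>x\<in>J. \<forall>a. a * x \<in> J \<and> x * a \<in> J)"

lemma c0_in:
  fixes c :: "nat \<Rightarrow> 'a::real_normed_vector"
  assumes "closed J" "d > 0"
    and h: "\<And>t. t \<noteq> 0 \<Longrightarrow> \<bar>t\<bar> < d \<Longrightarrow> (\<Sum>k\<le>N. t^k *\<^sub>R c k) \<in> J"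
  shows "c 0 \<in> J"
proof -
  define q where "q = (\<lambda>t::real. \<Sum>k\<le>N. t^k *\<^sub>R c k)"
  have q0: "q 0 = c 0"
    unfolding q_def by (simp add: power_0_left sum.atMost_shift)
  have "isCont q 0" unfolding q_def by (intro continuous_intros)
  then have lim: "(q \<longlongrightarrow> q 0) (at 0)" by (simp add: isCont_def)
  have ev: "eventually (\<lambda>t. q t \<in> J) (at 0)"
    unfolding eventually_at using assms(2) h by (auto simp: q_def dist_real_def)
  show ?thesis using Lim_in_closed_set[OF assms(1) ev _ lim] q0 by simp
qed

lemma coeff_in:
  fixes c :: "nat \<Rightarrow> 'a::real_normed_vector"
  assumes J: "closed J" "\<And>x y. x\<in>J \<Longrightarrow> y\<in>J \<Longrightarrow> x+y \<in> J" "\<And>c x. x\<in>J \<Longrightarrow> c *\<^sub>R x \<in> J" and "d > 0"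
  shows "(\<And>t. t \<noteq> 0 \<Longrightarrow> \<bar>t\<bar> < d \<Longrightarrow> (\<Sum>k\<le>N. t^k *\<^sub>R c k) \<in> J) \<Longrightarrow> k \<le> N \<Longrightarrow> c k \<in> J"
proof (induction N arbitrary: c k)
  case 0
  then show ?case using c0_in[OF J(1) \<open>d>0\<close>, where N=0 and c=c] by auto
next
  case (Suc N)
  have c0: "c 0 \<in> J" using c0_in[OF J(1) \<open>d>0\<close>, where N="Suc N" and c=c] Suc.prems(1) by blast
  have "(\<Sum>k\<le>N. t^k *\<^sub>R c (Suc k)) \<in> J" if "t \<noteq> 0" "\<bar>t\<bar> < d" for t
  proof -
    have "(\<Sum>k\<le>Suc N. t^k *\<^sub>R c k) = c 0 + t *\<^sub>R (\<Sum>k\<le>N. t^k *\<^sub>R c (Suc k))"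
      by (simp add: sum.atMost_Suc_shift scaleR_sum_right del: sum.atMost_Suc)
    then have "(\<Sum>k\<le>N. t^k *\<^sub>R c (Suc k)) = (1/t) *\<^sub>R ((\<Sum>k\<le>Suc N. t^k *\<^sub>R c k) + (-1) *\<^sub>R c 0)"
      using that by simp
    also have "\<dots> \<in> J" using J Suc.prems(1)[OF that] c0 by blast
    finally show ?thesis .
  qed
  note IH = Suc.IH[of "\<lambda>k. c (Suc k)", OF this]
  show ?case
  proof (cases k)
    case 0 then show ?thesis using c0 by simp
  next
    case (Suc k') then show ?thesis using IH[of k'] Suc.prems(2) by simp
  qed
qed


fun D :: "'a::real_normed_algebra \<Rightarrow> 'a \<Rightarrow> nat \<Rightarrow> nat \<Rightarrow> 'a" where
  "D x y 0 k = (if k = 0 then x else if k = 1 then y else 0)"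
| "D x y (Suc n) k = x * D x y n k + (if k = 0 then 0 else y * D x y n (k - 1))"

definition F :: "nat \<Rightarrow> 'a::real_normed_algebra \<Rightarrow> 'a list \<Rightarrow> 'a" where
  "F n x ws = (\<Sum>i\<le>n. lp (replicate i x @ ws @ replicate (n - i) x))"

lemma D_zero: "Suc n < k \<Longrightarrow> D x y n k = 0"
  by (induction n arbitrary: k) auto

lemma D_top: "D x y n (Suc n) = lp (replicate (Suc n) y)"
  by (induction n) (auto simp: D_zero)

lemma D_bot: "D x y n 0 = lp (replicate (Suc n) x)"
  by (induction n) auto

lemma D_one: "D x y n 1 = F n x [y]"
proof (induction n)
  case 0 then show ?case by (simp add: F_def)
next
  case (Suc n)
  have "F (Suc n) x [y] = lp ([y] @ replicate (Suc n) x) + (\<Sum>i\<le>n. lp (replicate (Suc i) x @ [y] @ replicate (n - i) x))"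
    unfolding F_def by (subst sum.atMost_Suc_shift) simp
  also have "(\<Sum>i\<le>n. lp (replicate (Suc i) x @ [y] @ replicate (n - i) x)) = x * F n x [y]"
    unfolding F_def sum_distrib_left by (intro sum.cong refl) (simp add: lp_Cons)
  finally show ?case using Suc by (simp add: D_bot add.commute)
qed

lemma D_exp: "lp (replicate (Suc n) (x + t *\<^sub>R y)) = (\<Sum>k\<le>Suc n. t^k *\<^sub>R D x y n k)"
proof (induction n)
  case 0 then show ?case by simp
next
  case (Suc n)
  have "lp (replicate (Suc (Suc n)) (x + t *\<^sub>R y)) = (x + t *\<^sub>R y) * lp (replicate (Suc n) (x + t *\<^sub>R y))"
    by simp
  also have "\<dots> = (\<Sum>k\<le>Suc n. t^k *\<^sub>R (x * D x y n k)) + (\<Sum>k\<le>Suc n. t^(Suc k) *\<^sub>R (y * D x y n k))"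
    unfolding Suc distrib_right sum_distrib_left
    by (simp add: mult_scaleR_right mult_scaleR_left scaleR_scaleR mult.commute sum.distrib)
  also have "(\<Sum>k\<le>Suc n. t^k *\<^sub>R (x * D x y n k)) = (\<Sum>k\<le>Suc (Suc n). t^k *\<^sub>R (x * D x y n k))"
    by (simp add: D_zero)
  also have "(\<Sum>k\<le>Suc n. t^(Suc k) *\<^sub>R (y * D x y n k)) = (\<Sum>k\<le>Suc (Suc n). t^k *\<^sub>R (if k = 0 then 0 else y * D x y n (k - 1)))"
    by (subst sum.atMost_Suc_shift[of _ "Suc n"]) simp
  finally show ?case by (simp add: sum.distrib[symmetric] scaleR_add_right)
qed

lemma lp_rep_cont: "continuous_on UNIV (\<lambda>x::'a::real_normed_algebra. lp (replicate (Suc n) x))"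
proof (induction n)
  case 0 then show ?case by (simp add: continuous_on_id)
next
  case (Suc n)
  have "(\<lambda>x::'a. lp (replicate (Suc (Suc n)) x)) = (\<lambda>x. x * lp (replicate (Suc n) x))" by simp
  then show ?case using Suc by (simp add: continuous_on_mult continuous_on_id)
qed


lemma bounded_index:
  assumes "nil_alg (UNIV :: 'a::{real_normed_algebra,banach} set)"
  shows "\<exists>k. \<forall>x::'a. lp (replicate (Suc k) x) = 0"
proof -
  define S where "S k = {x::'a. lp (replicate (Suc k) x) = 0}" for k
  have clS: "closed (S k)" for k
    unfolding S_def using lp_rep_cont[of k, where 'a='a]
    by (intro closed_Collect_eq) (auto intro: continuous_intros)
  have US: "\<Union>(range S) = UNIV"
  proof safe
    fix x :: 'a
    obtain n where "n \<ge> 1" "mprod (\<lambda>_. x) (replicate n 0) = 0"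
      using assms unfolding nil_alg_def by blast
    then have "x \<in> S (n - 1)" by (cases n) (auto simp: S_def mprod_lp)
    then show "x \<in> \<Union>(range S)" by blast
  qed simp
  have "\<exists>k. interior (S k) \<noteq> {}"
  proof (rule ccontr)
    assume "\<not> ?thesis"
    then have "euclidean interior_of \<Union>(range S) = {}"
      by (intro Baire_category_alt) (auto simp: completely_metrizable_space_euclidean clS)
    then show False using US by simp
  qed
  then obtain k x0 where "x0 \<in> interior (S k)" by blast
  then obtain r where r: "r > 0" "ball x0 r \<subseteq> S k" using mem_interior by blast
  have "lp (replicate (Suc k) y) = 0" for y :: 'a
  proof -
    define d where "d = r / (norm y + 1)"
    have ny: "norm y + 1 > 0" by (simp add: add_nonneg_pos)
    have d: "d > 0" using r ny unfolding d_def by (rule divide_pos_pos[OF _ ny] | simp)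
    have "(\<Sum>j\<le>Suc k. t^j *\<^sub>R D x0 y k j) \<in> {0}" if "t \<noteq> 0" "\<bar>t\<bar> < d" for t
    proof -
      have "\<bar>t\<bar> * norm y \<le> \<bar>t\<bar> * (norm y + 1)" by (simp add: mult_left_mono)
      also have "\<dots> < d * (norm y + 1)" using that by (intro mult_strict_right_mono) (auto simp: ny)
      also have "\<dots> = r" using ny by (simp add: d_def)
      finally have "x0 + t *\<^sub>R y \<in> ball x0 r" by (simp add: dist_norm)
      then have "x0 + t *\<^sub>R y \<in> S k" using r by blast
      then show ?thesis using D_exp[of k x0 t y] by (simp add: S_def)
    qed
    from coeff_in[where J="{0}" and d=d and N="Suc k" and c="D x0 y k", OF _ _ _ d this]
    have "D x0 y k (Suc k) \<in> {0}" by auto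
    then show ?thesis by (simp add: D_top)
  qed
  then show ?thesis by blast
qed


context
  fixes J :: "'a::{real_normed_algebra,banach} set"
  assumes J: "cideal J"
begin

lemma cJ_add: "x \<in> J \<Longrightarrow> y \<in> J \<Longrightarrow> x + y \<in> J" using J by (auto simp: cideal_def)
lemma cJ_scale: "x \<in> J \<Longrightarrow> c *\<^sub>R x \<in> J" using J by (auto simp: cideal_def)
lemma cJ_0: "0 \<in> J" using J by (auto simp: cideal_def)
lemma cJ_closed: "closed J" using J by (auto simp: cideal_def)
lemma cJ_multl: "x \<in> J \<Longrightarrow> a * x \<in> J" using J by (auto simp: cideal_def)
lemma cJ_multr: "x \<in> J \<Longrightarrow> x * a \<in> J" using J by (auto simp: cideal_def)
lemma cJ_diff: "x \<in> J \<Longrightarrow> y \<in> J \<Longrightarrow> x - y \<in> J"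
  using cJ_add[of x "(-1) *\<^sub>R y"] cJ_scale[of y "-1"] by simp

lemma cJ_sum: "finite A \<Longrightarrow> (\<And>i. i \<in> A \<Longrightarrow> f i \<in> J) \<Longrightarrow> sum f A \<in> J"
  by (induction A rule: finite_induct) (auto intro: cJ_0 cJ_add)

lemma cJ_ext: "l \<noteq> [] \<Longrightarrow> lp l \<in> J \<Longrightarrow> lp (us @ l @ vs) \<in> J"
proof -
  assume l: "l \<noteq> []" "lp l \<in> J"
  have "lp (us @ [lp l] @ vs) \<in> J"
  proof -
    have "lp ([lp l] @ vs) \<in> J" using l by (cases "vs = []") (auto simp: lp_Cons cJ_multr)
    moreover have "us \<noteq> [] \<Longrightarrow> lp (us @ ([lp l] @ vs)) = lp us * lp ([lp l] @ vs)"
      by (rule lp_append) auto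
    ultimately show ?thesis by (cases "us = []") (auto intro: cJ_multl)
  qed
  then show ?thesis using lp_flat[OF l(1)] by simp
qed

lemma lin:
  assumes "\<forall>x. lp (replicate (Suc M) x) \<in> J"
  shows "F M x [y] \<in> J"
proof -
  have e: "(\<Sum>k\<le>Suc M. t^k *\<^sub>R D x y M k) \<in> J" for t :: real
    using assms D_exp[of M x t y] by metis
  have "D x y M 1 \<in> J"
    by (rule coeff_in[where J=J and d=1 and N="Suc M" and c="D x y M"])
       (use e cJ_closed cJ_add cJ_scale in auto)
  then show ?thesis using D_one[of x y M] by simp
qed

lemma lin_word:
  assumes "\<forall>x. lp (replicate (Suc M) x) \<in> J" "ws \<noteq> []"
  shows "F M x ws \<in> J"
proof -
  have "F M x ws = F M x [lp ws]"
    unfolding F_def using lp_flat[OF assms(2)] by simp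
  then show ?thesis using lin[OF assms(1)] by simp
qed

lemma key:
  assumes h: "\<forall>x. lp (replicate (Suc M) x) \<in> J" and M: "M \<ge> 1"
  shows "lp (replicate M x @ [z] @ replicate M y) \<in> J"
proof -
  define T where "T i j = lp (replicate i x @ [z] @ replicate j y @ replicate (M-i) x @ replicate (M-j) y)" for i j
  define K where "K = lp (replicate M x @ [z] @ replicate M y)"
  have 1: "(\<Sum>i\<le>M. T i j) \<in> J" if "j \<le> M" for j
  proof (cases "j = M")
    case True
    have "(\<Sum>i\<le>M. T i j) = F M x ([z] @ replicate M y)"
      unfolding F_def T_def True by simp
    then show ?thesis using lin_word[OF h] by simp
  next
    case False
    then have jM: "M - j \<noteq> 0" using that by simp
    have "T i j = lp (replicate i x @ ([z] @ replicate j y) @ replicate (M-i) x) * lp (replicate (M-j) y)" for i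
      unfolding T_def using jM lp_append[of "replicate i x @ ([z] @ replicate j y) @ replicate (M-i) x" "replicate (M-j) y"]
      by simp
    then have "(\<Sum>i\<le>M. T i j) = F M x ([z] @ replicate j y) * lp (replicate (M-j) y)"
      unfolding F_def sum_distrib_right by simp
    then show ?thesis using lin_word[OF h] cJ_multr by simp
  qed
  have S: "(\<Sum>i\<le>M. \<Sum>j\<le>M. T i j) \<in> J"
    using cJ_sum[of "{..M}", OF _ 1] by (subst sum.swap) simp
  have 3: "(\<Sum>j\<le>M. T i j) \<in> J" if "i < M" for i
  proof -
    have "T i j = lp (replicate i x @ [z]) * lp (replicate j y @ replicate (M-i) x @ replicate (M-j) y)" for j
      unfolding T_def using that lp_append[of "replicate i x @ [z]" "replicate j y @ replicate (M-i) x @ replicate (M-j) y"]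
      by simp
    then have "(\<Sum>j\<le>M. T i j) = lp (replicate i x @ [z]) * F M y (replicate (M-i) x)"
      unfolding F_def sum_distrib_left by simp
    then show ?thesis using lin_word[OF h, of "replicate (M-i) x" y] that cJ_multl by simp
  qed
  have 4: "T M j = K" if "j \<le> M" for j
  proof -
    have "replicate j y @ replicate (M-j) y = replicate M y"
      using that by (simp add: replicate_add[symmetric])
    then show ?thesis unfolding T_def K_def by simp
  qed
  have "(\<Sum>i\<le>M. \<Sum>j\<le>M. T i j) = (\<Sum>i<M. \<Sum>j\<le>M. T i j) + real (Suc M) *\<^sub>R K"
    using 4 by (simp add: lessThan_Suc_atMost[symmetric] sum_constant_scaleR algebra_simps)
  then have "real (Suc M) *\<^sub>R K = (\<Sum>i\<le>M. \<Sum>j\<le>M. T i j) - (\<Sum>i<M. \<Sum>j\<le>M. T i j)"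
    by simp
  also have "\<dots> \<in> J" using S 3 by (intro cJ_diff S) (rule cJ_sum, auto)
  finally have "(1 / real (Suc M)) *\<^sub>R (real (Suc M) *\<^sub>R K) \<in> J" by (rule cJ_scale)
  then show ?thesis unfolding K_def by simp
qed

end


lemma closure_bin:
  fixes g :: "'a::real_normed_vector \<Rightarrow> 'a \<Rightarrow> 'b::real_normed_vector"
  assumes "\<And>x y. x\<in>S \<Longrightarrow> y\<in>S \<Longrightarrow> g x y \<in> T" "closed T"
    "\<And>y. continuous_on UNIV (\<lambda>x. g x y)" "\<And>x. continuous_on UNIV (g x)"
    "x \<in> closure S" "y \<in> closure S"
  shows "g x y \<in> T"
proof -
  have 1: "g x' y' \<in> T" if "x' \<in> closure S" "y' \<in> S" for x' y'
  proof -
    have "(\<lambda>x. g x y') ` closure S \<subseteq> T"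
      by (rule image_closure_subset[OF continuous_on_subset[OF assms(3)] assms(2)])
         (use assms(1) that(2) in auto)
    then show ?thesis using that(1) by blast
  qed
  have "g x ` closure S \<subseteq> T"
    by (rule image_closure_subset[OF continuous_on_subset[OF assms(4)] assms(2)])
       (use 1 assms(5) in auto)
  then show ?thesis using assms(6) by blast
qed

lemma cont_mult_l: "continuous_on UNIV (\<lambda>x::'a::real_normed_algebra. x * a * b)"
  by (intro continuous_intros)
lemma cont_mult_r: "continuous_on UNIV (\<lambda>x::'a::real_normed_algebra. b * a * x)"
  by (intro continuous_intros)

context
  fixes J :: "'a::{real_normed_algebra,banach} set"
  assumes J: "cideal J"
begin

lemma step:
  assumes h: "\<forall>x. lp (replicate (Suc M) x) \<in> J" and M: "M \<ge> 1"
  shows "\<exists>I. cideal I \<and> (\<forall>x. lp (replicate M x) \<in> I) \<and> (\<forall>p\<in>I. \<forall>q\<in>I. \<forall>a. p * a * q \<in> J)"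
proof -
  define G where "G = {lp (us @ replicate M (x::'a) @ vs) | us vs x. True}"
  define S0 where "S0 = span (J \<union> G)"
  define I where "I = closure S0"
  have Mne: "replicate M x \<noteq> []" for x :: 'a using M by simp
  have GJ: "g * a * g' \<in> J" if "g \<in> G" "g' \<in> G" for g g' a
  proof -
    obtain us vs x where g: "g = lp (us @ replicate M x @ vs)" using \<open>g \<in> G\<close> unfolding G_def by auto
    obtain us' vs' y where g': "g' = lp (us' @ replicate M y @ vs')" using \<open>g' \<in> G\<close> unfolding G_def by auto
    define l where "l = replicate M x @ (vs @ [a] @ us') @ replicate M y"
    have "lp (us @ replicate M x @ vs) * a * lp (us' @ replicate M y @ vs')
        = lp ((us @ replicate M x @ vs) @ [a] @ (us' @ replicate M y @ vs'))"
    proof -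
      have "lp ((us @ replicate M x @ vs) @ ([a] @ (us' @ replicate M y @ vs')))
          = lp (us @ replicate M x @ vs) * lp ([a] @ (us' @ replicate M y @ vs'))"
        using Mne by (intro lp_append) auto
      also have "lp ([a] @ (us' @ replicate M y @ vs')) = a * lp (us' @ replicate M y @ vs')"
        using Mne by (simp add: lp_Cons)
      finally show ?thesis by (simp add: mult.assoc)
    qed
    also have "\<dots> = lp (us @ l @ vs')" unfolding l_def by simp
    finally have e: "g * a * g' = lp (us @ l @ vs')" using g g' by simp
    have "lp l = lp (replicate M x @ [lp (vs @ [a] @ us')] @ replicate M y)"
      unfolding l_def by (rule lp_flat) simp
    then have "lp l \<in> J" using key[OF J h M] by simp
    then show ?thesis using e cJ_ext[OF J, of l us vs'] Mne l_def by simp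
  qed
  have Gid: "g * a \<in> G \<and> a * g \<in> G" if "g \<in> G" for g a
  proof -
    obtain us vs x where g: "g = lp (us @ replicate M x @ vs)" using \<open>g \<in> G\<close> unfolding G_def by auto
    have ne: "us @ replicate M x @ vs \<noteq> []" using Mne by simp
    have "g * a = lp ((us @ replicate M x @ vs) @ [a])"
      unfolding g using lp_append[OF ne, of "[a]"] by simp
    then have 1: "g * a = lp (us @ replicate M x @ (vs @ [a]))" by simp
    have "a * g = lp ([a] @ (us @ replicate M x @ vs))"
      unfolding g using lp_append[OF _ ne, of "[a]"] by simp
    then have 2: "a * g = lp ((a # us) @ replicate M x @ vs)" by simp
    have "g * a \<in> G" unfolding G_def mem_Collect_eq
      by (rule exI[of _ us], rule exI[of _ "vs @ [a]"], rule exI[of _ x]) (simp add: 1)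
    moreover have "a * g \<in> G" unfolding G_def mem_Collect_eq
      by (rule exI[of _ "a # us"], rule exI[of _ vs], rule exI[of _ x]) (simp add: 2)
    ultimately show ?thesis by blast
  qed
  have JGid: "x * a \<in> S0 \<and> a * x \<in> S0" if "x \<in> J \<union> G" for x a
  proof -
    have "x * a \<in> J \<union> G \<and> a * x \<in> J \<union> G"
      using that Gid[of x a] cJ_multl[OF J, of x a] cJ_multr[OF J, of x a] by auto
    then show ?thesis unfolding S0_def by (simp add: span_base)
  qed
  have S0id: "p * a \<in> S0 \<and> a * p \<in> S0" if "p \<in> S0" for p a
    using that unfolding S0_def
  proof (induction rule: span_induct_alt)
    case base then show ?case by (simp add: span_zero)
  next
    case (step c x y)
    then show ?case using JGid[of x a] unfolding S0_def
      by (auto simp: distrib_left distrib_right mult_scaleR_left mult_scaleR_right intro!: span_add span_scale)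
  qed
  have prod1: "x * a * q \<in> J" if "x \<in> J \<union> G" "q \<in> S0" for x q a
  proof (cases "x \<in> J")
    case True then show ?thesis using cJ_multr[OF J] by blast
  next
    case False
    then have xG: "x \<in> G" using that by blast
    show ?thesis using \<open>q \<in> S0\<close> unfolding S0_def
    proof (induction rule: span_induct_alt)
      case base then show ?case by (simp add: cJ_0[OF J])
    next
      case (step c z w)
      have "x * a * z \<in> J" using step(1) GJ[OF xG] cJ_multl[OF J] by blast
      then show ?case using step(2)
        by (simp add: distrib_left mult_scaleR_right cJ_add[OF J] cJ_scale[OF J])
    qed
  qed
  have prod: "p * a * q \<in> J" if "p \<in> S0" "q \<in> S0" for p q a
    using \<open>p \<in> S0\<close> unfolding S0_def
  proof (induction rule: span_induct_alt)
    case base then show ?case by (simp add: cJ_0[OF J])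
  next
    case (step c x y)
    then show ?case using prod1[OF step(1) \<open>q \<in> S0\<close>, of a]
      by (simp add: distrib_right mult_scaleR_left cJ_add[OF J] cJ_scale[OF J])
  qed
  have sub: "S0 \<subseteq> I" unfolding I_def by (rule closure_subset)
  have "cideal I"
    unfolding cideal_def
  proof (intro conjI ballI allI)
    show "closed I" unfolding I_def by simp
    show "0 \<in> I" using sub unfolding S0_def by (auto intro: span_zero)
    show "x + y \<in> I" if "x \<in> I" "y \<in> I" for x y
    proof (rule closure_bin[where S=S0 and g="\<lambda>x y. x + y" and T=I])
      show "x + y \<in> I" if "x \<in> S0" "y \<in> S0" for x y
        using that sub unfolding S0_def by (meson span_add subsetD)
      show "closed I" unfolding I_def by simp
      show "continuous_on UNIV (\<lambda>x. x + y)" for y :: 'a by (intro continuous_intros)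
      show "continuous_on UNIV (\<lambda>y. x + y)" for x :: 'a by (intro continuous_intros)
    qed (use that in \<open>simp_all add: I_def\<close>)
    show "c *\<^sub>R x \<in> I" if "x \<in> I" for c x
    proof -
      have "(\<lambda>x. c *\<^sub>R x) ` closure S0 \<subseteq> I"
        by (rule image_closure_subset)
           (use sub in \<open>auto simp: I_def S0_def intro!: continuous_intros span_scale\<close>)
      then show ?thesis using that unfolding I_def by blast
    qed
    show "a * x \<in> I" if "x \<in> I" for a x
    proof -
      have "(\<lambda>x. a * x) ` closure S0 \<subseteq> I"
        by (rule image_closure_subset)
           (use sub S0id in \<open>auto simp: I_def intro!: continuous_intros\<close>)
      then show ?thesis using that unfolding I_def by blast
    qed
    show "x * a \<in> I" if "x \<in> I" for a x
    proof -
      have "(\<lambda>x. x * a) ` closure S0 \<subseteq> I"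
        by (rule image_closure_subset)
           (use sub S0id in \<open>auto simp: I_def intro!: continuous_intros\<close>)
      then show ?thesis using that unfolding I_def by blast
    qed
  qed
  moreover have "lp (replicate M x) \<in> I" for x
  proof -
    have "lp (replicate M x) \<in> G" unfolding G_def mem_Collect_eq
      by (rule exI[of _ "[]"], rule exI[of _ "[]"], rule exI[of _ x]) simp
    then show ?thesis using sub unfolding S0_def by (auto intro: span_base)
  qed
  moreover have "p * a * q \<in> J" if "p \<in> I" "q \<in> I" for p q a
    by (rule closure_bin[where S=S0 and g="\<lambda>p q. p * a * q" and T=J, OF prod cJ_closed[OF J] cont_mult_l cont_mult_r])
       (use that in \<open>auto simp: I_def\<close>)
  ultimately show ?thesis by blast
qed

end

fun NN :: "nat \<Rightarrow> nat" where
  "NN 0 = 1"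
| "NN (Suc m) = 2 * NN m + 1"

lemma NN_pos: "NN m \<ge> 1" by (induction m) auto

lemma nh:
  fixes J :: "'a::{real_normed_algebra,banach} set"
  shows "cideal J \<Longrightarrow> \<forall>x. lp (replicate (Suc m) x) \<in> J \<Longrightarrow> length l = NN m \<Longrightarrow> lp l \<in> J"
proof (induction m arbitrary: J l)
  case 0
  then obtain x where "l = [x]" by (cases l) auto
  then show ?case using 0 by simp
next
  case (Suc m)
  obtain I where I: "cideal I" "\<forall>x. lp (replicate (Suc m) x) \<in> I" "\<forall>p\<in>I. \<forall>q\<in>I. \<forall>a. p * a * q \<in> J"
    using step[OF Suc.prems(1,2)] by auto
  define n where "n = NN m"
  have n: "n \<ge> 1" "length l = 2 * n + 1" using NN_pos Suc.prems(3) by (auto simp: n_def)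
  define l1 where "l1 = take n l"
  define a where "a = l ! n"
  define l2 where "l2 = drop (Suc n) l"
  have l: "l = l1 @ [a] @ l2"
    unfolding l1_def a_def l2_def using n by (simp add: id_take_nth_drop)
  have len: "length l1 = NN m" "length l2 = NN m" using n by (auto simp: l1_def l2_def n_def)
  then have ne: "l1 \<noteq> []" "l2 \<noteq> []" using NN_pos[of m] by auto
  have "lp l = lp l1 * a * lp l2"
    using ne unfolding l by (simp add: lp_append lp_Cons mult.assoc)
  moreover have "lp l1 \<in> I" "lp l2 \<in> I" using Suc.IH[OF I(1) I(2)] len by auto
  ultimately show ?case using I(3) by simp
qed

lemma grabiner:
  assumes "nil_alg (UNIV :: 'a::{real_normed_algebra,banach} set)"
  shows "\<exists>N\<ge>1. \<forall>l::'a list. length l = N \<longrightarrow> lp l = 0"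
proof -
  obtain k where k: "\<forall>x::'a. lp (replicate (Suc k) x) = 0" using bounded_index[OF assms] by blast
  have c: "cideal ({0} :: 'a set)" by (simp add: cideal_def)
  show ?thesis using nh[OF c, of k] k NN_pos[of k] by auto
qed

lemma nilp:
  assumes "nil_alg (UNIV :: 'a::{real_normed_algebra,banach} set)"
  shows "nilpotent_alg (A :: 'a set)"
proof -
  obtain N where "N \<ge> 1" "\<forall>l::'a list. length l = N \<longrightarrow> lp l = 0" using grabiner[OF assms] by blast
  then show ?thesis unfolding nilpotent_alg_def by (auto simp: mprod_lp)
qed

theorem corollary1p5:
  fixes dummyR :: "'a::{real_normed_algebra, banach}"
    and dummyC :: "'b::{real_normed_algebra, banach}"
  shows "(\<forall>A :: 'a set. subalg scaleR A \<and> closure A = UNIV \<and> is_PI (scaleR :: real \<Rightarrow> 'a \<Rightarrow> 'a) A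
            \<and> nil_alg (UNIV :: 'a set) \<longrightarrow> nilpotent_alg A)
       \<and> (\<forall>(sc :: complex \<Rightarrow> 'b \<Rightarrow> 'b) (A :: 'b set). complex_scale sc \<and> subalg sc A \<and> closure A = UNIV
            \<and> is_PI sc A \<and> nil_alg (UNIV :: 'b set) \<longrightarrow> nilpotent_alg A)"
  using nilp[where 'a='a] nilp[where 'a='b] by blast


end
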